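(* Let $\sum_{n=1}^{\infty}x_n$ be an absolutely convergent real series whose associated function $f(\chi_A)=\sum_{n\in A}x_n$ is injective on $W=\{\chi_A\in\{0,1\}^{\mathbb{N}} : A \text{ is infinite and } \mathbb{N}\setminus A\text{ is infinite}\}$. Then for all ideals $I,J$ on $\mathbb{N}$ containing $\mathrm{Fin}$ we have $A_{I\cap J}(x_n)=A_I(x_n)\cap A_J(x_n)$.
   Context: An ideal on $\mathbb{N}$ is a family $I\subseteq P(\mathbb{N})$ closed under finite unions and subsets with $\mathbb{N}\notin I$; $\mathrm{Fin}$ is the ideal of finite sets. Subsets of $\mathbb{N}$ are identified with characteristic functions in $\{0,1\}^{\mathbb{N}}$. $A_I(x_n)=\{\sum_{n\in A}x_n : A\in I\}$. *)

theory Defs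
  imports "HOL-Analysis.Analysis"
begin

definition is_ideal :: "nat set set \<Rightarrow> bool" where
  "is_ideal I \<longleftrightarrow>
     (\<forall>A\<in>I. \<forall>B\<in>I. A \<union> B \<in> I) \<and>
     (\<forall>A\<in>I. \<forall>B. B \<subseteq> A \<longrightarrow> B \<in> I) \<and>
     UNIV \<notin> I"

definition Fin :: "nat set set" where
  "Fin = {A. finite A}"

definition subsum :: "(nat \<Rightarrow> real) \<Rightarrow> nat set \<Rightarrow> real" where
  "subsum x A = (\<Sum>n. if n \<in> A then x n else 0)"

definition W_sets :: "nat set set" where
  "W_sets = {A. infinite A \<and> infinite (UNIV - A)}"

definition achievement :: "nat set set \<Rightarrow> (nat \<Rightarrow> real) \<Rightarrow> real set" where
  "achievement I x = subsum x ` I"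

end

theory Submission
  imports Defs
begin

lemma coinf_ideal:
  assumes "is_ideal I" "Fin \<subseteq> I" "A \<in> I"
  shows "infinite (UNIV - A)"
proof
  assume "finite (UNIV - A)"
  hence "UNIV - A \<in> I" using assms(2) by (auto simp: Fin_def)
  hence "A \<union> (UNIV - A) \<in> I" using assms(1,3) unfolding is_ideal_def by blast
  moreover have "A \<union> (UNIV - A) = UNIV" by blast
  ultimately show False using assms(1) unfolding is_ideal_def by simp
qed

theorem mainTheorem19:
  fixes x :: "nat \<Rightarrow> real" and I J :: "nat set set"
  assumes "summable (\<lambda>n. \<bar>x n\<bar>)"
    and "inj_on (subsum x) W_sets"
    and "is_ideal I" and "Fin \<subseteq> I"
    and "is_ideal J" and "Fin \<subseteq> J"
  shows "achievement (I \<inter> J) x = achievement I x \<inter> achievement J x"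
proof
  show "achievement (I \<inter> J) x \<subseteq> achievement I x \<inter> achievement J x"
    by (auto simp: achievement_def)
next
  show "achievement I x \<inter> achievement J x \<subseteq> achievement (I \<inter> J) x"
  proof
    fix s assume "s \<in> achievement I x \<inter> achievement J x"
    then obtain A B where A: "A \<in> I" and B: "B \<in> J" and sA: "s = subsum x A"
      and sB: "s = subsum x B" by (auto simp: achievement_def)
    show "s \<in> achievement (I \<inter> J) x"
    proof (cases "finite A")
      case True
      hence "A \<in> J" using assms(6) by (auto simp: Fin_def)
      thus ?thesis using A sA by (auto simp: achievement_def)
    next
      case fA: False
      show ?thesis
      proof (cases "finite B")
        case True
        hence "B \<in> I" using assms(4) by (auto simp: Fin_def)
        thus ?thesis using B sB by (auto simp: achievement_def)
      next
        case False
        have "A \<in> W_sets" using fA coinf_ideal[OF assms(3,4) A] by (simp add: W_sets_def)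
        moreover have "B \<in> W_sets" using False coinf_ideal[OF assms(5,6) B] by (simp add: W_sets_def)
        ultimately have "A = B" using assms(2) sA sB by (auto dest: inj_onD)
        thus ?thesis using A B sA by (auto simp: achievement_def)
      qed
    qed
  qed
qed

end
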